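(* The logic $\mathsf{iKRI}:=\mathsf{ICK}\oplus((p\wedge(p\mathrel{\Box\!\!\!\rightarrow} q))\to q)\oplus(((p\mathrel{\Box\!\!\!\rightarrow} q)\wedge(q\mathrel{\Box\!\!\!\rightarrow} r))\to(p\mathrel{\Box\!\!\!\rightarrow} r))$ is sound and complete with respect to the class of conditional frames $(X,\leq,\mathcal{R})$ that satisfy, for all worlds $x\in X$ and upsets $a,b$: $x\in a$ implies $x\in{\uparrow}R_a[x]$, and $R_a[x]\subseteq b$ implies $R_a[x]\subseteq{\uparrow}R_b[x]$.
   Context: Formulas: $\phi ::= p\mid\bot\mid\phi\wedge\phi\mid\phi\vee\phi\mid\phi\to\phi\mid\phi\mathrel{\Box\!\!\!\rightarrow}\phi$. $\mathsf{ICK}\oplus\Gamma$ is the smallest set containing intuitionistic propositional logic, $\Gamma$, $(p\mathrel{\Box\!\!\!\rightarrow}(q\wedge r))\leftrightarrow((p\mathrel{\Box\!\!\!\rightarrow} q)\wedge(p\mathrel{\Box\!\!\!\rightarrow} r))$ and $(p\mathrel{\Box\!\!\!\rightarrow}\top)\leftrightarrow\top$, closed under uniform substitution, modus ponens and congruence rules for both arguments of $\mathrel{\Box\!\!\!\rightarrow}$. A conditional frame is $(X,\leq,\mathcal{R})$, $(X,\leq)$ a nonempty preorder, $\mathcal{R}=\{R_a\mid a\text{ an upset}\}$ with $(\leq\circ R_a)\subseteq(R_a\circ\leq)$; valuations assign upsets to letters and $x\models\phi\mathrel{\Box\!\!\!\rightarrow}\psi$ iff every $y$ with $xR_{V(\phi)}y$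 satisfies $\psi$. *)

theory Defs
  imports Main
begin

datatype fm = Var nat | Bot | And fm fm | Or fm fm | Imp fm fm | Cond fm fm

definition Top :: fm where "Top = Imp Bot Bot"
definition Iff :: "fm \<Rightarrow> fm \<Rightarrow> fm" where "Iff a b = And (Imp a b) (Imp b a)"

primrec subst :: "(nat \<Rightarrow> fm) \<Rightarrow> fm \<Rightarrow> fm" where
  "subst s (Var n) = s n"
| "subst s Bot = Bot"
| "subst s (And a b) = And (subst s a) (subst s b)"
| "subst s (Or a b) = Or (subst s a) (subst s b)"
| "subst s (Imp a b) = Imp (subst s a) (subst s b)"
| "subst s (Cond a b) = Cond (subst s a) (subst s b)"

text \<open>Intuitionistic propositional logic is given by its standard Hilbert axiom
schemata (with modus ponens). p, q, r are the letters 0, 1, 2.\<close>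

inductive_set ICK_ext :: "fm set \<Rightarrow> fm set" for \<Gamma> :: "fm set" where
  ipc1: "Imp a (Imp b a) \<in> ICK_ext \<Gamma>"
| ipc2: "Imp (Imp a (Imp b c)) (Imp (Imp a b) (Imp a c)) \<in> ICK_ext \<Gamma>"
| ipc3: "Imp (And a b) a \<in> ICK_ext \<Gamma>"
| ipc4: "Imp (And a b) b \<in> ICK_ext \<Gamma>"
| ipc5: "Imp a (Imp b (And a b)) \<in> ICK_ext \<Gamma>"
| ipc6: "Imp a (Or a b) \<in> ICK_ext \<Gamma>"
| ipc7: "Imp b (Or a b) \<in> ICK_ext \<Gamma>"
| ipc8: "Imp (Imp a c) (Imp (Imp b c) (Imp (Or a b) c)) \<in> ICK_ext \<Gamma>"
| ipc9: "Imp Bot a \<in> ICK_ext \<Gamma>"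
| gamma: "a \<in> \<Gamma> \<Longrightarrow> a \<in> ICK_ext \<Gamma>"
| ck_and: "Iff (Cond (Var 0) (And (Var 1) (Var 2)))
               (And (Cond (Var 0) (Var 1)) (Cond (Var 0) (Var 2))) \<in> ICK_ext \<Gamma>"
| ck_top: "Iff (Cond (Var 0) Top) Top \<in> ICK_ext \<Gamma>"
| us: "a \<in> ICK_ext \<Gamma> \<Longrightarrow> subst s a \<in> ICK_ext \<Gamma>"
| mp: "Imp a b \<in> ICK_ext \<Gamma> \<Longrightarrow> a \<in> ICK_ext \<Gamma> \<Longrightarrow> b \<in> ICK_ext \<Gamma>"
| cong_l: "Iff a b \<in> ICK_ext \<Gamma> \<Longrightarrow> Iff (Cond a c) (Cond b c) \<in> ICK_ext \<Gamma>"
| cong_r: "Iff a b \<in> ICK_ext \<Gamma> \<Longrightarrow> Iff (Cond c a) (Cond c b) \<in> ICK_ext \<Gamma>"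

definition iKRI :: "fm set" where
  "iKRI = ICK_ext
     { Imp (And (Var 0) (Cond (Var 0) (Var 1))) (Var 1),
       Imp (And (Cond (Var 0) (Var 1)) (Cond (Var 1) (Var 2))) (Cond (Var 0) (Var 2)) }"

definition upset :: "'w set \<Rightarrow> ('w \<Rightarrow> 'w \<Rightarrow> bool) \<Rightarrow> 'w set \<Rightarrow> bool" where
  "upset X le a \<longleftrightarrow> a \<subseteq> X \<and> (\<forall>x\<in>a. \<forall>y\<in>X. le x y \<longrightarrow> y \<in> a)"

definition up :: "'w set \<Rightarrow> ('w \<Rightarrow> 'w \<Rightarrow> bool) \<Rightarrow> 'w set \<Rightarrow> 'w set" where
  "up X le A = {y \<in> X. \<exists>x\<in>A. le x y}"

text \<open>R a is the relation R_a (only meaningful for upsets a); R_a[x] is its image of x.\<close>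
definition Rimg :: "('w set \<Rightarrow> 'w \<Rightarrow> 'w \<Rightarrow> bool) \<Rightarrow> 'w set \<Rightarrow> 'w \<Rightarrow> 'w set" where
  "Rimg R a x = {y. R a x y}"

definition cond_frame :: "'w set \<Rightarrow> ('w \<Rightarrow> 'w \<Rightarrow> bool) \<Rightarrow> ('w set \<Rightarrow> 'w \<Rightarrow> 'w \<Rightarrow> bool) \<Rightarrow> bool" where
  "cond_frame X le R \<longleftrightarrow>
     X \<noteq> {} \<and>
     (\<forall>x y. le x y \<longrightarrow> x \<in> X \<and> y \<in> X) \<and>
     (\<forall>x\<in>X. le x x) \<and>
     (\<forall>x y z. le x y \<longrightarrow> le y z \<longrightarrow> le x z) \<and>
     (\<forall>a. upset X le a \<longrightarrow>
        (\<forall>x y. R a x y \<longrightarrow> x \<in> X \<and> y \<in> X) \<and>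
        (\<forall>x y z. le x y \<and> R a y z \<longrightarrow> (\<exists>w. R a x w \<and> le w z)))"

fun sat :: "'w set \<Rightarrow> ('w \<Rightarrow> 'w \<Rightarrow> bool) \<Rightarrow> ('w set \<Rightarrow> 'w \<Rightarrow> 'w \<Rightarrow> bool) \<Rightarrow> (nat \<Rightarrow> 'w set)
            \<Rightarrow> 'w \<Rightarrow> fm \<Rightarrow> bool" where
  "sat X le R V x (Var p) \<longleftrightarrow> x \<in> V p"
| "sat X le R V x Bot \<longleftrightarrow> False"
| "sat X le R V x (And a b) \<longleftrightarrow> sat X le R V x a \<and> sat X le R V x b"
| "sat X le R V x (Or a b) \<longleftrightarrow> sat X le R V x a \<or> sat X le R V x b"
| "sat X le R V x (Imp a b) \<longleftrightarrow>
     (\<forall>y\<in>X. le x y \<longrightarrow> sat X le R V y a \<longrightarrow> sat X le R V y b)"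
| "sat X le R V x (Cond a b) \<longleftrightarrow>
     (\<forall>y. R {z \<in> X. sat X le R V z a} x y \<longrightarrow> sat X le R V y b)"

definition valid_frame :: "'w set \<Rightarrow> ('w \<Rightarrow> 'w \<Rightarrow> bool) \<Rightarrow> ('w set \<Rightarrow> 'w \<Rightarrow> 'w \<Rightarrow> bool) \<Rightarrow> fm \<Rightarrow> bool" where
  "valid_frame X le R a \<longleftrightarrow>
     (\<forall>V. (\<forall>p. upset X le (V p)) \<longrightarrow> (\<forall>x\<in>X. sat X le R V x a))"

definition KRI_frame :: "'w set \<Rightarrow> ('w \<Rightarrow> 'w \<Rightarrow> bool) \<Rightarrow> ('w set \<Rightarrow> 'w \<Rightarrow> 'w \<Rightarrow> bool) \<Rightarrow> bool" where
  "KRI_frame X le R \<longleftrightarrow> cond_frame X le R \<and>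
     (\<forall>x\<in>X. \<forall>a b. upset X le a \<longrightarrow> upset X le b \<longrightarrow>
        (x \<in> a \<longrightarrow> x \<in> up X le (Rimg R a x)) \<and>
        (Rimg R a x \<subseteq> b \<longrightarrow> Rimg R a x \<subseteq> up X le (Rimg R b x)))"

end

theory Submission
  imports Defs
begin


abbreviation L where "L \<equiv> iKRI"

lemma Lg: "a \<in> {Imp (And (Var 0) (Cond (Var 0) (Var 1))) (Var 1),
       Imp (And (Cond (Var 0) (Var 1)) (Cond (Var 1) (Var 2))) (Cond (Var 0) (Var 2))} \<Longrightarrow> a \<in> L"
  unfolding iKRI_def by (rule ICK_ext.gamma)

lemmas Lintros = ICK_ext.intros[where \<Gamma> = "{Imp (And (Var 0) (Cond (Var 0) (Var 1))) (Var 1),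
       Imp (And (Cond (Var 0) (Var 1)) (Cond (Var 1) (Var 2))) (Cond (Var 0) (Var 2))}", folded iKRI_def]

lemma L1: "Imp a (Imp b a) \<in> L" by (rule Lintros)
lemma L2: "Imp (Imp a (Imp b c)) (Imp (Imp a b) (Imp a c)) \<in> L" by (rule Lintros)
lemma L3: "Imp (And a b) a \<in> L" by (rule Lintros)
lemma L4: "Imp (And a b) b \<in> L" by (rule Lintros)
lemma L5: "Imp a (Imp b (And a b)) \<in> L" by (rule Lintros)
lemma L6: "Imp a (Or a b) \<in> L" by (rule Lintros)
lemma L7: "Imp b (Or a b) \<in> L" by (rule Lintros)
lemma L8: "Imp (Imp a c) (Imp (Imp b c) (Imp (Or a b) c)) \<in> L" by (rule Lintros)
lemma L9: "Imp Bot a \<in> L" by (rule Lintros)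
lemma Lmp: "Imp a b \<in> L \<Longrightarrow> a \<in> L \<Longrightarrow> b \<in> L" by (rule Lintros)
lemma Lcongl: "Iff a b \<in> L \<Longrightarrow> Iff (Cond a c) (Cond b c) \<in> L" by (rule Lintros)
lemma Lcongr: "Iff a b \<in> L \<Longrightarrow> Iff (Cond c a) (Cond c b) \<in> L" by (rule Lintros)

definition s3 :: "fm \<Rightarrow> fm \<Rightarrow> fm \<Rightarrow> nat \<Rightarrow> fm" where
  "s3 A B C n = (if n = 0 then A else if n = 1 then B else C)"

lemma Lsub: "a \<in> L \<Longrightarrow> subst s a \<in> L" by (rule Lintros)

lemma Lckand: "Iff (Cond A (And B C)) (And (Cond A B) (Cond A C)) \<in> L"
  using Lsub[OF Lintros(11), of "s3 A B C"] by (simp add: Iff_def s3_def)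
lemma Lcktop: "Iff (Cond A Top) Top \<in> L"
  using Lsub[OF Lintros(12), of "s3 A A A"] by (simp add: Iff_def s3_def Top_def)
lemma Lax1: "Imp (And A (Cond A B)) B \<in> L"
  using Lsub[OF Lg, of "Imp (And (Var 0) (Cond (Var 0) (Var 1))) (Var 1)" "s3 A B B"] by (simp add: s3_def)
lemma Lax2: "Imp (And (Cond A B) (Cond B C)) (Cond A C) \<in> L"
  using Lsub[OF Lg, of "Imp (And (Cond (Var 0) (Var 1)) (Cond (Var 1) (Var 2))) (Cond (Var 0) (Var 2))" "s3 A B C"] by (simp add: s3_def)

definition thy :: "fm set \<Rightarrow> bool" where
  "thy T \<longleftrightarrow> L \<subseteq> T \<and> (\<forall>a b. Imp a b \<in> T \<longrightarrow> a \<in> T \<longrightarrow> b \<in> T)"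

lemma thyL: "thy L" unfolding thy_def using Lmp by blast

lemma thyD: "thy T \<Longrightarrow> a \<in> L \<Longrightarrow> a \<in> T" "thy T \<Longrightarrow> Imp a b \<in> T \<Longrightarrow> a \<in> T \<Longrightarrow> b \<in> T"
  unfolding thy_def by blast+

lemma thy_and: "thy T \<Longrightarrow> And a b \<in> T \<longleftrightarrow> a \<in> T \<and> b \<in> T"
  by (meson L3 L4 L5 thyD)

lemma Lid: "Imp a a \<in> L"
  by (meson L1 L2 Lmp)

lemma TopL: "Top \<in> L" unfolding Top_def by (rule Lid)

definition plus :: "fm set \<Rightarrow> fm \<Rightarrow> fm set" where
  "plus T a = {c. Imp a c \<in> T}"

lemma thy_plus: assumes "thy T" shows "thy (plus T a)" "T \<subseteq> plus T a" "a \<in> plus T a"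
proof -
  show "T \<subseteq> plus T a" unfolding plus_def using assms by (auto intro: thyD(2)[OF assms] thyD(1)[OF assms L1])
  moreover have "Imp a c \<in> T" if "Imp a (Imp b c) \<in> T" "Imp a b \<in> T" for b c
    using thyD(2)[OF assms thyD(2)[OF assms thyD(1)[OF assms L2] that(1)] that(2)] .
  ultimately show "thy (plus T a)" unfolding plus_def using assms
    by (auto simp: thy_def)
  show "a \<in> plus T a" unfolding plus_def using assms by (auto intro: thyD Lid)
qed

lemma deduct: "thy T \<Longrightarrow> (\<And>U. thy U \<Longrightarrow> T \<subseteq> U \<Longrightarrow> a \<in> U \<Longrightarrow> b \<in> U) \<Longrightarrow> Imp a b \<in> T"
  using thy_plus[of T a] unfolding plus_def by blast

lemma Liff: "Imp a b \<in> L \<Longrightarrow> Imp b a \<in> L \<Longrightarrow> Iff a b \<in> L"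
  unfolding Iff_def by (meson L5 Lmp)

lemma iffD: "thy T \<Longrightarrow> Iff a b \<in> T \<Longrightarrow> a \<in> T \<Longrightarrow> b \<in> T" "thy T \<Longrightarrow> Iff a b \<in> T \<Longrightarrow> b \<in> T \<Longrightarrow> a \<in> T"
  unfolding Iff_def by (meson thy_and thyD)+

lemma thm_cond: assumes "c \<in> L" shows "Cond k c \<in> L"
proof -
  have "Iff c Top \<in> L" by (rule Liff) (auto intro: Lmp[OF L1] assms TopL)
  then have "Iff (Cond k c) (Cond k Top) \<in> L" by (rule Lcongr)
  moreover have "Cond k Top \<in> L" using iffD(2)[OF thyL Lcktop TopL] .
  ultimately show ?thesis using iffD(2)[OF thyL] by blast
qed

lemma mono_cond: assumes "Imp x y \<in> L" shows "Imp (Cond k x) (Cond k y) \<in> L"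
proof -
  have "Imp x (And x y) \<in> L"
    by (rule deduct[OF thyL]) (metis assms thyD thy_and subsetD thy_def)
  then have "Iff x (And x y) \<in> L" using Liff L3 by blast
  then have "Iff (Cond k x) (Cond k (And x y)) \<in> L" by (rule Lcongr)
  then show ?thesis
    by (intro deduct[OF thyL]) (meson Lckand iffD thyD thy_and)
qed

lemma cond_and: "thy T \<Longrightarrow> Cond k x \<in> T \<Longrightarrow> Cond k y \<in> T \<Longrightarrow> Cond k (And x y) \<in> T"
  by (meson Lckand iffD(2) thyD(1) thy_and)

lemma cond_trans: "thy T \<Longrightarrow> Cond a b \<in> T \<Longrightarrow> Cond b c \<in> T \<Longrightarrow> Cond a c \<in> T"
  by (meson Lax2 thyD thy_and)

lemma cond_theory: assumes "thy T" shows "thy {c. Cond k c \<in> T}"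
  unfolding thy_def
proof safe
  show "x \<in> L \<Longrightarrow> Cond k x \<in> T" for x using thm_cond assms thyD by blast
  fix a b assume "Cond k (Imp a b) \<in> T" "Cond k a \<in> T"
  then have "Cond k (And (Imp a b) a) \<in> T" using cond_and assms by blast
  moreover have "Imp (And (Imp a b) a) b \<in> L"
    by (rule deduct[OF thyL]) (metis thyD thy_and)
  ultimately show "Cond k b \<in> T" using mono_cond assms thyD by blast
qed



definition pthy :: "fm set \<Rightarrow> bool" where
  "pthy T \<longleftrightarrow> thy T \<and> (\<forall>a b. Or a b \<in> T \<longrightarrow> a \<in> T \<or> b \<in> T) \<and> Bot \<notin> T"

lemma lindenbaum:
  assumes T: "thy T" and p: "\<psi> \<notin> T"
  shows "\<exists>D. pthy D \<and> T \<subseteq> D \<and> \<psi> \<notin> D"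
proof -
  let ?A = "{U. thy U \<and> T \<subseteq> U \<and> \<psi> \<notin> U}"
  have "\<exists>M\<in>?A. \<forall>X\<in>?A. M \<subseteq> X \<longrightarrow> X = M"
  proof (rule subset_Zorn_nonempty)
    have "T \<in> ?A" using T p by simp
    then show "?A \<noteq> {}" by (rule ex_in_conv[THEN iffD1, OF exI])
    fix C assume C: "C \<noteq> {}" "subset.chain ?A C"
    then have CA: "C \<subseteq> ?A" and ch: "\<forall>x\<in>C. \<forall>y\<in>C. x \<subseteq> y \<or> y \<subseteq> x"
      by (auto simp: subset.chain_def)
    have "thy (\<Union>C)" unfolding thy_def
    proof safe
      fix x assume "x \<in> L"
      obtain U where "U \<in> C" using C(1) by blast
      then have "thy U" using CA by blast
      then show "x \<in> \<Union>C" using \<open>U \<in> C\<close> \<open>x \<in> L\<close> thyD(1) by blast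
    next
      fix a b U V assume "Imp a b \<in> U" "U \<in> C" "a \<in> V" "V \<in> C"
      then have "U \<subseteq> V \<or> V \<subseteq> U" using ch by blast
      moreover have "thy U" "thy V" using \<open>U \<in> C\<close> \<open>V \<in> C\<close> CA by auto
      ultimately show "b \<in> \<Union>C" using \<open>Imp a b \<in> U\<close> \<open>U \<in> C\<close> \<open>a \<in> V\<close> \<open>V \<in> C\<close> thyD(2)
        by (metis UnionI subsetD)
    qed
    moreover have "T \<subseteq> \<Union>C"
    proof -
      obtain U where "U \<in> C" using C(1) by blast
      then have "T \<subseteq> U" using CA by blast
      then show ?thesis using \<open>U \<in> C\<close> by blast
    qed
    moreover have "\<psi> \<notin> \<Union>C" using CA by blast
    ultimately show "\<Union>C \<in> ?A" by simp
  qed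
  then obtain M where M0: "M \<in> ?A" and mx: "\<And>X. X \<in> ?A \<Longrightarrow> M \<subseteq> X \<Longrightarrow> X = M"
    by (elim bexE) (rule that, assumption, blast)
  from M0 have M: "thy M" "T \<subseteq> M" "\<psi> \<notin> M" by simp_all
  have key: "a \<notin> M \<Longrightarrow> Imp a \<psi> \<in> M" for a
  proof (rule ccontr)
    assume "a \<notin> M" "Imp a \<psi> \<notin> M"
    have "\<psi> \<notin> plus M a" using \<open>Imp a \<psi> \<notin> M\<close> by (simp add: plus_def)
    then have "plus M a \<in> ?A" using thy_plus(1,2)[OF M(1), of a] M(2) by auto
    then have "plus M a = M" using mx thy_plus(2)[OF M(1)] by blast
    then show False using thy_plus(3)[OF M(1), of a] \<open>a \<notin> M\<close> by simp
  qed
  have pr: "a \<in> M \<or> b \<in> M" if "Or a b \<in> M" for a b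
  proof (rule ccontr)
    assume "\<not> (a \<in> M \<or> b \<in> M)"
    then have "Imp a \<psi> \<in> M" "Imp b \<psi> \<in> M" using key by auto
    then have "\<psi> \<in> M" using thyD[OF M(1)] L8[of a \<psi> b] that by blast
    then show False using M by blast
  qed
  have "Bot \<notin> M"
  proof
    assume "Bot \<in> M" then show False using M thyD(2)[OF M(1) thyD(1)[OF M(1) L9]] by blast
  qed
  then have "pthy M" unfolding pthy_def using pr M(1) by blast
  then show ?thesis using M by blast
qed



definition W :: "fm set set" where "W = {T. pthy T}"
definition ext :: "fm \<Rightarrow> fm set set" where "ext f = {G\<in>W. f \<in> G}"
definition kap :: "fm set set \<Rightarrow> fm" where
  "kap a = (if \<exists>f. ext f = a then SOME f. ext f = a else Top)"
definition cR :: "fm set set \<Rightarrow> fm set \<Rightarrow> fm set \<Rightarrow> bool" where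
  "cR a G D \<longleftrightarrow> G \<in> W \<and> D \<in> W \<and> (\<forall>\<psi>. Cond (kap a) \<psi> \<in> G \<longrightarrow> \<psi> \<in> D)"
definition cle :: "fm set \<Rightarrow> fm set \<Rightarrow> bool" where
  "cle G D \<longleftrightarrow> G \<in> W \<and> D \<in> W \<and> G \<subseteq> D"
definition cV :: "nat \<Rightarrow> fm set set" where "cV p = ext (Var p)"

lemma Wthy: "G \<in> W \<Longrightarrow> thy G" by (simp add: W_def pthy_def)

lemma ext_imp: assumes "ext a \<subseteq> ext b" shows "Imp a b \<in> L"
proof (rule ccontr)
  assume "Imp a b \<notin> L"
  then have "b \<notin> plus L a" by (simp add: plus_def)
  then obtain D where "pthy D" "plus L a \<subseteq> D" "b \<notin> D" using lindenbaum[OF thy_plus(1)[OF thyL]] by blast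
  then show False using assms thy_plus(3)[OF thyL, of a] by (auto simp: ext_def W_def)
qed

lemma ext_eq_cond: assumes "ext a = ext b" "G \<in> W" "Cond a c \<in> G" shows "Cond b c \<in> G"
proof -
  have "Iff a b \<in> L" using ext_imp assms(1) Liff by simp
  then have "Iff (Cond a c) (Cond b c) \<in> L" by (rule Lcongl)
  then have "Iff (Cond a c) (Cond b c) \<in> G" using thyD(1)[OF Wthy[OF assms(2)]] by blast
  then show ?thesis using iffD(1)[OF Wthy[OF assms(2)]] assms(3) by blast
qed

lemma key_lemma: assumes G: "G \<in> W" and H: "\<forall>D\<in>W. (\<forall>\<psi>. Cond k \<psi> \<in> G \<longrightarrow> \<psi> \<in> D) \<longrightarrow> c \<in> D"
  shows "Cond k c \<in> G"
proof (rule ccontr)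
  assume "Cond k c \<notin> G"
  then have "c \<notin> {x. Cond k x \<in> G}" by simp
  then obtain D where "pthy D" "{x. Cond k x \<in> G} \<subseteq> D" "c \<notin> D"
    using lindenbaum[OF cond_theory[OF Wthy[OF G]]] by blast
  then show False using H by (auto simp: W_def)
qed

lemma kap_cases: "(\<exists>f. ext f = a) \<and> ext (kap a) = a \<or> (\<not>(\<exists>f. ext f = a)) \<and> kap a = Top"
proof (cases "\<exists>f. ext f = a")
  case True
  then have "ext (SOME f. ext f = a) = a" by (rule someI_ex)
  then show ?thesis using True by (simp add: kap_def)
next
  case False
  then show ?thesis by (simp add: kap_def)
qed

lemma truth: "G \<in> W \<Longrightarrow> sat W cle cR cV G f \<longleftrightarrow> f \<in> G"
proof (induction f arbitrary: G)
  case (Var x)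
  then show ?case by (simp add: cV_def ext_def)
next
  case Bot
  then show ?case by (simp add: W_def pthy_def)
next
  case (And f1 f2)
  then show ?case using thy_and Wthy by simp
next
  case (Or f1 f2)
  have "Or f1 f2 \<in> G \<longleftrightarrow> f1 \<in> G \<or> f2 \<in> G"
  proof
    assume "Or f1 f2 \<in> G" then show "f1 \<in> G \<or> f2 \<in> G" using Or.prems unfolding W_def pthy_def by blast
  next
    assume "f1 \<in> G \<or> f2 \<in> G"
    then show "Or f1 f2 \<in> G" using thyD[OF Wthy[OF Or.prems]] L6[of f1 f2] L7[of f2 f1] by blast
  qed
  then show ?case using Or by simp
next
  case (Imp f1 f2)
  show ?case
  proof
    assume s: "sat W cle cR cV G (Imp f1 f2)"
    show "Imp f1 f2 \<in> G"
    proof (rule ccontr)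
      assume "Imp f1 f2 \<notin> G"
      then have "f2 \<notin> plus G f1" by (simp add: plus_def)
      then obtain D where D: "pthy D" "plus G f1 \<subseteq> D" "f2 \<notin> D"
        using lindenbaum[OF thy_plus(1)[OF Wthy[OF Imp.prems]]] by blast
      then have "D \<in> W" "G \<subseteq> D" "f1 \<in> D" using thy_plus[OF Wthy[OF Imp.prems]]
        by (auto simp: W_def)
      then have "cle G D" using Imp.prems by (simp add: cle_def)
      have "sat W cle cR cV D f1" using Imp.IH(1)[OF \<open>D \<in> W\<close>] \<open>f1 \<in> D\<close> by blast
      then have "sat W cle cR cV D f2" using s \<open>cle G D\<close> \<open>D \<in> W\<close> by simp
      then show False using Imp.IH(2)[OF \<open>D \<in> W\<close>] D(3) by blast
    qed
  next
    assume "Imp f1 f2 \<in> G"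
    moreover have "f2 \<in> D" if "D \<in> W" "G \<subseteq> D" "f1 \<in> D" "Imp f1 f2 \<in> G" for D
      using thyD(2)[OF Wthy[OF that(1)]] that by blast
    ultimately show "sat W cle cR cV G (Imp f1 f2)" using Imp.IH
      unfolding sat.simps cle_def by blast
  qed
next
  case (Cond f1 f2)
  have e: "{z \<in> W. sat W cle cR cV z f1} = ext f1" using Cond.IH(1) by (auto simp: ext_def)
  have k: "ext (kap (ext f1)) = ext f1" using kap_cases[of "ext f1"] by auto
  have "sat W cle cR cV G (Cond f1 f2) \<longleftrightarrow> (\<forall>D. cR (ext f1) G D \<longrightarrow> sat W cle cR cV D f2)"
    using e by simp
  also have "\<dots> \<longleftrightarrow> (\<forall>D. cR (ext f1) G D \<longrightarrow> f2 \<in> D)"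
    using Cond.IH(2) unfolding cR_def by blast
  also have "\<dots> \<longleftrightarrow> Cond (kap (ext f1)) f2 \<in> G"
    using key_lemma[OF Cond.prems] Cond.prems by (auto simp: cR_def)
  also have "\<dots> \<longleftrightarrow> Cond f1 f2 \<in> G"
    using ext_eq_cond[OF k Cond.prems] ext_eq_cond[OF k[symmetric] Cond.prems] by blast
  finally show ?case .
qed



lemma kap_in: assumes "x \<in> W" "x \<in> a" shows "kap a \<in> x"
  using kap_cases[of a]
proof
  assume "(\<exists>f. ext f = a) \<and> ext (kap a) = a"
  then show ?thesis using assms by (auto simp: ext_def)
next
  assume "(\<not>(\<exists>f. ext f = a)) \<and> kap a = Top"
  then show ?thesis using thyD(1)[OF Wthy[OF assms(1)] TopL] by simp
qed

lemma cR_refl: assumes "x \<in> W" "x \<in> a" shows "cR a x x"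
  unfolding cR_def
proof (intro conjI allI impI assms(1))
  fix \<psi> assume "Cond (kap a) \<psi> \<in> x"
  then have "And (kap a) (Cond (kap a) \<psi>) \<in> x" using kap_in[OF assms] thy_and[OF Wthy[OF assms(1)]] by blast
  then show "\<psi> \<in> x" using thyD[OF Wthy[OF assms(1)]] Lax1 by blast
qed

lemma kap_cond: assumes x: "x \<in> W" and sub: "Rimg cR a x \<subseteq> b" shows "Cond (kap a) (kap b) \<in> x"
  using kap_cases[of b]
proof
  assume "(\<exists>f. ext f = b) \<and> ext (kap b) = b"
  then have eb: "ext (kap b) = b" by blast
  show ?thesis
  proof (rule key_lemma[OF x], intro ballI impI)
    fix D assume "D \<in> W" "\<forall>\<psi>. Cond (kap a) \<psi> \<in> x \<longrightarrow> \<psi> \<in> D"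
    then have "cR a x D" using x by (simp add: cR_def)
    then have "D \<in> b" using sub by (auto simp: Rimg_def)
    then show "kap b \<in> D" using eb by (auto simp: ext_def)
  qed
next
  assume "(\<not>(\<exists>f. ext f = b)) \<and> kap b = Top"
  then show ?thesis using thyD(1)[OF Wthy[OF x] thm_cond[OF TopL]] by simp
qed

lemma canon_KRI: assumes ne: "W \<noteq> {}" shows "KRI_frame W cle cR"
  unfolding KRI_frame_def cond_frame_def
proof (intro conjI ballI allI impI ne)
  show "cle x y \<Longrightarrow> x \<in> W" "cle x y \<Longrightarrow> y \<in> W" for x y by (simp_all add: cle_def)
  show "x \<in> W \<Longrightarrow> cle x x" for x by (simp add: cle_def)
  show "cle x y \<Longrightarrow> cle y z \<Longrightarrow> cle x z" for x y z by (auto simp: cle_def)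
  fix a
  show "cR a x y \<Longrightarrow> x \<in> W" "cR a x y \<Longrightarrow> y \<in> W" for x y by (simp_all add: cR_def)
  show "\<exists>w. cR a x w \<and> cle w z" if "cle x y \<and> cR a y z" for x y z
  proof (intro exI conjI)
    show "cR a x z" using that unfolding cle_def cR_def by blast
    show "cle z z" using that unfolding cle_def cR_def by blast
  qed
next
  fix x a b assume x: "x \<in> W"
  show "x \<in> up W cle (Rimg cR a x)" if "x \<in> a"
    using cR_refl[OF x that] x by (auto simp: up_def Rimg_def cle_def)
  show "Rimg cR a x \<subseteq> up W cle (Rimg cR b x)" if sub: "Rimg cR a x \<subseteq> b"
  proof
    fix y assume "y \<in> Rimg cR a x"
    then have y: "cR a x y" by (simp add: Rimg_def)
    have kc: "Cond (kap a) (kap b) \<in> x" by (rule kap_cond[OF x sub])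
    have "cR b x y" unfolding cR_def
    proof (intro conjI allI impI)
      show "x \<in> W" "y \<in> W" using y by (simp_all add: cR_def)
      fix \<psi> assume "Cond (kap b) \<psi> \<in> x"
      then have "Cond (kap a) \<psi> \<in> x" using cond_trans[OF Wthy[OF x] kc] by blast
      then show "\<psi> \<in> y" using y by (simp add: cR_def)
    qed
    then show "y \<in> up W cle (Rimg cR b x)" by (auto simp: up_def Rimg_def cle_def cR_def)
  qed
qed

lemma cV_upset: "upset W cle (cV p)"
  by (auto simp: upset_def cV_def ext_def cle_def)

lemma completeness:
  assumes "\<forall>(X::fm set set) le R. KRI_frame X le R \<longrightarrow> valid_frame X le R \<phi>"
  shows "\<phi> \<in> iKRI"
proof (rule ccontr)
  assume "\<phi> \<notin> iKRI"
  then obtain D where D: "pthy D" "\<phi> \<notin> D" using lindenbaum[OF thyL] by blast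
  then have DW: "D \<in> W" by (simp add: W_def)
  then have "KRI_frame W cle cR" using canon_KRI by blast
  then have "valid_frame W cle cR \<phi>" using assms by blast
  then have "sat W cle cR cV D \<phi>" using DW cV_upset unfolding valid_frame_def by blast
  then show False using truth[OF DW] D by blast
qed



lemma cfD:
  assumes "cond_frame X le R"
  shows "le x y \<Longrightarrow> x \<in> X" "le x y \<Longrightarrow> y \<in> X" "x \<in> X \<Longrightarrow> le x x"
    "le x y \<Longrightarrow> le y z \<Longrightarrow> le x z"
    "upset X le a \<Longrightarrow> R a x y \<Longrightarrow> x \<in> X" "upset X le a \<Longrightarrow> R a x y \<Longrightarrow> y \<in> X"
    "upset X le a \<Longrightarrow> le x y \<Longrightarrow> R a y z \<Longrightarrow> \<exists>w. R a x w \<and> le w z"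
  using assms unfolding cond_frame_def by blast+

lemma persist:
  assumes cf: "cond_frame X le R" and V: "\<forall>p. upset X le (V p)"
  shows "le x y \<Longrightarrow> sat X le R V x f \<Longrightarrow> sat X le R V y f"
proof (induction f arbitrary: x y)
  case (Var p)
  have "y \<in> X" using cfD(2)[OF cf Var.prems(1)] .
  then show ?case using V Var.prems unfolding upset_def sat.simps by blast
next
  case Bot
  then show ?case by simp
next
  case (And f1 f2)
  then show ?case by auto
next
  case (Or f1 f2)
  then show ?case by auto
next
  case (Imp f1 f2)
  show ?case unfolding sat.simps
  proof (intro ballI impI)
    fix z assume "z \<in> X" "le y z" "sat X le R V z f1"
    then show "sat X le R V z f2" using Imp.prems cfD(4)[OF cf Imp.prems(1) \<open>le y z\<close>] by simp
  qed
next
  case (Cond f1 f2)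
  let ?A = "{z \<in> X. sat X le R V z f1}"
  have up: "upset X le ?A" unfolding upset_def using Cond.IH(1) by blast
  show ?case unfolding sat.simps
  proof (intro allI impI)
    fix z assume "R ?A y z"
    then obtain w where w: "R ?A x w" "le w z" using cfD(7)[OF cf up Cond.prems(1)] by blast
    then have "sat X le R V w f2" using Cond.prems(2) by simp
    then show "sat X le R V z f2" using Cond.IH(2)[OF w(2)] by blast
  qed
qed

lemma tset_upset:
  assumes cf: "cond_frame X le R" and V: "\<forall>p. upset X le (V p)"
  shows "upset X le {z \<in> X. sat X le R V z f}"
  unfolding upset_def using persist[OF cf V] by blast

lemma subst_lemma:
  assumes cf: "cond_frame X le R" and V: "\<forall>p. upset X le (V p)"
  shows "x \<in> X \<Longrightarrow> sat X le R (\<lambda>p. {z \<in> X. sat X le R V z (s p)}) x f \<longleftrightarrow> sat X le R V x (subst s f)"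
proof (induction f arbitrary: x)
  case (Cond f1 f2)
  let ?V = "\<lambda>p. {z \<in> X. sat X le R V z (s p)}"
  have e: "{z \<in> X. sat X le R ?V z f1} = {z \<in> X. sat X le R V z (subst s f1)}"
    using Cond.IH(1) by blast
  have up: "upset X le {z \<in> X. sat X le R V z (subst s f1)}" by (rule tset_upset[OF cf V])
  show ?case unfolding sat.simps subst.simps e
    using Cond.IH(2) cfD(6)[OF cf up] by blast
qed auto

lemma valid_subst:
  assumes cf: "cond_frame X le R" and v: "valid_frame X le R f"
  shows "valid_frame X le R (subst s f)"
  unfolding valid_frame_def
proof (intro allI impI ballI)
  fix V :: "nat \<Rightarrow> _" and x assume V: "\<forall>p. upset X le (V p)" and x: "x \<in> X"
  have "\<forall>p. upset X le {z \<in> X. sat X le R V z (s p)}" using tset_upset[OF cf V] by blast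
  moreover have v': "\<forall>V. (\<forall>p. upset X le (V p)) \<longrightarrow> (\<forall>x\<in>X. sat X le R V x f)" using v by (simp add: valid_frame_def)
  ultimately have "sat X le R (\<lambda>p. {z \<in> X. sat X le R V z (s p)}) x f"
    using spec[OF v', of "\<lambda>p. {z \<in> X. sat X le R V z (s p)}"] x by blast
  then show "sat X le R V x (subst s f)" using subst_lemma[OF cf V x] by blast
qed

lemma soundness:
  assumes "f \<in> iKRI" "KRI_frame X le R"
  shows "valid_frame X le R f"
proof -
  have cf: "cond_frame X le R" using assms(2) by (simp add: KRI_frame_def)
  have kri: "\<And>x a b. x \<in> X \<Longrightarrow> upset X le a \<Longrightarrow> upset X le b \<Longrightarrow>
        (x \<in> a \<longrightarrow> x \<in> up X le (Rimg R a x)) \<and>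
        (Rimg R a x \<subseteq> b \<longrightarrow> Rimg R a x \<subseteq> up X le (Rimg R b x))"
    using assms(2) unfolding KRI_frame_def by blast
  note P = persist[OF cf]
  note C = cfD[OF cf]
  from assms(1) show ?thesis unfolding iKRI_def
  proof (induction f rule: ICK_ext.induct)
    case (ipc1 a b)
    show ?case unfolding valid_frame_def sat.simps by (intro allI impI ballI; meson P C)
  next
    case (ipc2 a b c)
    show ?case unfolding valid_frame_def sat.simps by (intro allI impI ballI; meson P C)
  next
    case (ipc3 a b)
    show ?case unfolding valid_frame_def sat.simps by (intro allI impI ballI; meson P C)
  next
    case (ipc4 a b)
    show ?case unfolding valid_frame_def sat.simps by (intro allI impI ballI; meson P C)
  next
    case (ipc5 a b)
    show ?case unfolding valid_frame_def sat.simps by (intro allI impI ballI; meson P C)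
  next
    case (ipc6 a b)
    show ?case unfolding valid_frame_def sat.simps by (intro allI impI ballI; meson P C)
  next
    case (ipc7 a b)
    show ?case unfolding valid_frame_def sat.simps by (intro allI impI ballI; meson P C)
  next
    case (ipc8 a c b)
    show ?case unfolding valid_frame_def sat.simps by (intro allI impI ballI; meson P C)
  next
    case (ipc9 a)
    show ?case unfolding valid_frame_def sat.simps by (intro allI impI ballI; meson P C)
  next
    case (gamma a)
    show ?case unfolding valid_frame_def
    proof (intro allI impI ballI)
      fix V :: "nat \<Rightarrow> _" and x assume V: "\<forall>p. upset X le (V p)" and x: "x \<in> X"
      have e: "{z \<in> X. z \<in> V p} = V p" for p using V by (auto simp: upset_def)
      have VX: "V p \<subseteq> X" for p using V by (simp add: upset_def)
      have Vup: "z \<in> V p \<Longrightarrow> le z w \<Longrightarrow> w \<in> V p" for z w p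
        using V C(2) unfolding upset_def by blast
      have ax1: "sat X le R V x (Imp (And (Var 0) (Cond (Var 0) (Var 1))) (Var 1))"
        unfolding sat.simps e
      proof (intro ballI impI)
        fix y assume y: "y \<in> X" "le x y" "y \<in> V 0 \<and> (\<forall>z. R (V 0) y z \<longrightarrow> z \<in> V 1)"
        then have "y \<in> up X le (Rimg R (V 0) y)" using kri[OF y(1), of "V 0" "V 0"] V by blast
        then obtain w where "R (V 0) y w" "le w y" by (auto simp: up_def Rimg_def)
        then show "y \<in> V 1" using y Vup by blast
      qed
      have ax2: "sat X le R V x (Imp (And (Cond (Var 0) (Var 1)) (Cond (Var 1) (Var 2))) (Cond (Var 0) (Var 2)))"
        unfolding sat.simps e
      proof (intro ballI impI allI)
        fix y z assume y: "y \<in> X" "le x y" "(\<forall>z. R (V 0) y z \<longrightarrow> z \<in> V 1) \<and> (\<forall>z. R (V 1) y z \<longrightarrow> z \<in> V 2)"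
          and z: "R (V 0) y z"
        have "Rimg R (V 0) y \<subseteq> V 1" using y by (auto simp: Rimg_def)
        then have "Rimg R (V 0) y \<subseteq> up X le (Rimg R (V 1) y)" using kri[OF y(1), of "V 0" "V 1"] V by blast
        then obtain w where "R (V 1) y w" "le w z" using z by (auto simp: up_def Rimg_def)
        then show "z \<in> V 2" using y Vup by blast
      qed
      show "sat X le R V x a" using gamma ax1 ax2 by auto
    qed
  next
    case ck_and
    then show ?case unfolding valid_frame_def Iff_def by auto
  next
    case ck_top
    then show ?case unfolding valid_frame_def Iff_def Top_def by auto
  next
    case (us a s)
    then show ?case using valid_subst[OF cf] by blast
  next
    case (mp a b)
    then show ?case unfolding valid_frame_def using C(3) by simp
  next
    case (cong_l a b c)
    show ?case unfolding valid_frame_def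
    proof (intro allI impI ballI)
      fix V :: "nat \<Rightarrow> _" and x assume V: "\<forall>p. upset X le (V p)" and x: "x \<in> X"
      have "{z \<in> X. sat X le R V z a} = {z \<in> X. sat X le R V z b}"
        using cong_l.IH V C(3) unfolding valid_frame_def Iff_def by auto
      then show "sat X le R V x (Iff (Cond a c) (Cond b c))" unfolding Iff_def by simp
    qed
  next
    case (cong_r a b c)
    show ?case unfolding valid_frame_def
    proof (intro allI impI ballI)
      fix V :: "nat \<Rightarrow> _" and x assume V: "\<forall>p. upset X le (V p)" and x: "x \<in> X"
      have "\<forall>z\<in>X. sat X le R V z a \<longleftrightarrow> sat X le R V z b"
        using cong_r.IH V C(3) unfolding valid_frame_def Iff_def by auto
      moreover have "upset X le {z \<in> X. sat X le R V z c}" by (rule tset_upset[OF cf V])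
      ultimately show "sat X le R V x (Iff (Cond c a) (Cond c b))" unfolding Iff_def
        using C(6) by auto
    qed
  qed
qed


theorem theorem5p12:
  shows "(\<phi> \<in> iKRI \<longrightarrow>
            (\<forall>(X::'w set) le R. KRI_frame X le R \<longrightarrow> valid_frame X le R \<phi>))
       \<and> ((\<forall>(X::fm set set) le R. KRI_frame X le R \<longrightarrow> valid_frame X le R \<phi>)
            \<longrightarrow> \<phi> \<in> iKRI)"
  using soundness completeness by blast

end
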